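(* Let $\{(\mathbf{x}^k,\mathbf{r}^k,\boldsymbol{\lambda}^k)\}$ be generated by Algorithm 2 under the bounded-delay assumption, let $k\ge0$ and $\alpha>0$. Then for any $\mathbf{x}$ independent of $i_k$ with $\mathbf{A}\mathbf{x}=\mathbf{b}$, $$\begin{aligned}&\mathbb{E}_{i_k}\Big[F(\mathbf{x}^{k+1})-F(\mathbf{x})-\langle\boldsymbol{\lambda}^{k+1},\mathbf{r}^{k+1}\rangle+(\beta-\rho)\|\mathbf{r}^{k+1}\|^2-\tfrac{\beta}{2}\|\mathbf{r}^{k+1}\|^2+\tfrac12\|\mathbf{x}^{k+1}-\mathbf{x}\|_{\mathbf{P}}^2\Big]+\tfrac12\mathbb{E}_{i_k}\|\mathbf{x}^{k+1}-\mathbf{x}^k\|^2_{\mathbf{P}-\mathbf{L}-\alpha L_c\mathbf{I}-\beta\mathbf{A}^\top\mathbf{A}}\\&-\frac{\kappa L_r\tau/\alpha+2L_r\tau}{2m}\sum_{d=k-\tau}^{k-1}\|\mathbf{x}^{d+1}-\mathbf{x}^d\|^2-\frac{1}{2m}\sum_{d=k-\tau}^{k-1}\|\mathbf{x}^{d+1}-\mathbf{x}^d\|^2_{\mathbf{L}}\\&\le\Big(1-\frac1m\Big)\Big[F(\mathbf{x}^k)-F(\mathbf{x})-\langle\boldsymbol{\lambda}^k,\mathbf{r}^k\rangle+\beta\|\mathbf{r}^k\|^2\Big]-\tfrac{\beta}{2}\|\mathbf{r}^k\|^2+\tfrac12\|\mathbf{x}^k-\mathbf{x}\|_{\mathbf{P}}^2,\end{aligned}$$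 where $\mathbf{P}=\mathrm{blkdiag}(\mathbf{P}_1,\ldots,\mathbf{P}_m)$, $L_c=\max_iL_i$, $\kappa=L_r/L_c$, $\mathbf{x}^d:=\mathbf{x}^0$ for $d<0$, and $\|\mathbf{z}\|_{\mathbf{M}}^2:=\mathbf{z}^\top\mathbf{M}\mathbf{z}$ for symmetric $\mathbf{M}$.
   Context: Problem: $\min_{\mathbf{x}} F(\mathbf{x}):=f(\mathbf{x})+g(\mathbf{x})$ s.t. $\mathbf{A}\mathbf{x}=\mathbf{b}$, where $\mathbf{x}=(\mathbf{x}_1;\ldots;\mathbf{x}_m)$ with blocks $\mathbf{x}_i\in\mathbb{R}^{n_i}$, $g(\mathbf{x})=\sum_{i=1}^m g_i(\mathbf{x}_i)$, $\mathbf{A}=[\mathbf{A}_1,\ldots,\mathbf{A}_m]$ with $\mathbf{A}_i\in\mathbb{R}^{q\times n_i}$, $\mathbf{b}\in\mathbb{R}^q$; $f$ is convex and continuously differentiable, each $g_i$ is proper, convex, lower semicontinuous. $\mathbf{U}_i\mathbf{y}$ denotes the vector whose $i$-th block is $\mathbf{y}_i$ and other blocks zero. Assumption (gradient Lipschitz continuity): there are constants $L_i>0$ and $L_r$ with $\|\nabla_i f(\mathbf{x}+\mathbf{U}_i\mathbf{y})-\nabla_i f(\mathbf{x})\|\le L_i\|\mathbf{y}_i\|$ and $\|\nabla f(\mathbf{x}+\mathbf{U}_i\mathbf{y})-\nabla f(\mathbf{x})\|\le L_r\|\mathbf{y}_i\|$ for all $i,\mathbf{x},\mathbf{y}$. $\mathbf{L}=\mathrm{blkdiag}(L_1\mathbf{I}_{n_1},\ldots,L_m\mathbf{I}_{n_m})$.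 Algorithm 2 (async-parallel randomized primal-dual block update, as analyzed): choose $\mathbf{x}^0$, $\boldsymbol{\lambda}^0=\mathbf{0}$, $\mathbf{r}^0=\mathbf{A}\mathbf{x}^0-\mathbf{b}$, $\beta>0,\rho>0$, symmetric PSD $\mathbf{P}_i$. At iteration $k$, a block index $i_k\in\{1,\ldots,m\}$ and a (possibly outdated) point $\hat{\mathbf{x}}^k$ are used; $\mathbf{x}_i^{k+1}=\mathbf{x}_i^k$ for $i\ne i_k$ and $$\mathbf{x}_{i_k}^{k+1}\in\arg\min_{\mathbf{x}_{i_k}}\big\langle\nabla_{i_k} f(\hat{\mathbf{x}}^k)-\mathbf{A}_{i_k}^\top(\boldsymbol{\lambda}^k-\beta\mathbf{r}^k),\mathbf{x}_{i_k}\big\rangle+g_{i_k}(\mathbf{x}_{i_k})+\tfrac12\|\mathbf{x}_{i_k}-\mathbf{x}_{i_k}^k\|_{\mathbf{P}_{i_k}}^2;$$ then $\mathbf{r}^{k+1}=\mathbf{r}^k+\mathbf{A}_{i_k}(\mathbf{x}_{i_k}^{k+1}-\mathbf{x}_{i_k}^k)$ and $\boldsymbol{\lambda}^{k+1}=\boldsymbol{\lambda}^k-\rho\mathbf{r}^{k+1}$. Conditionally on the history before iteration $k$ (which determines $\mathbf{x}^k,\mathbf{r}^k,\boldsymbol{\lambda}^k$ and $\hat{\mathbf{x}}^k$), $i_k$ is uniformly distributed on $\{1,\ldots,m\}$; $\mathbb{E}_{i_k}$ denotes this conditional expectation, and "$\mathbf{x}$ independent of $i_k$" means $\mathbf{x}$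 is determined by that history. Assumption (bounded delay): there is an integer $\tau\ge0$ such that $\hat{\mathbf{x}}^k=\mathbf{x}^k+\sum_{d\in J(k)}(\mathbf{x}^d-\mathbf{x}^{d+1})$ for some subset $J(k)\subseteq\{k-\tau,\ldots,k-1\}$. *)

theory Defs
  imports "HOL-Analysis.Analysis"
begin

text \<open>Coordinates of R^N are the finite type 'n; blk c is the block index of coordinate c.
  blockproj blk i y is U_i y_i: keeps the i-th block of y and zeroes the others.\<close>
definition blockproj :: "('n::finite \<Rightarrow> nat) \<Rightarrow> nat \<Rightarrow> real^'n \<Rightarrow> real^'n" where
  "blockproj blk i y = (\<chi> c. if blk c = i then y $ c else 0)"

definition qf :: "real^'n^'n \<Rightarrow> real^'n \<Rightarrow> real" where
  "qf M z = z \<bullet> (M *v z)"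

definition blkdiagL :: "('n::finite \<Rightarrow> nat) \<Rightarrow> (nat \<Rightarrow> real) \<Rightarrow> real^'n^'n" where
  "blkdiagL blk L = (\<chi> c c'. if c = c' then L (blk c) else 0)"

definition proper_fun :: "('a \<Rightarrow> ereal) \<Rightarrow> bool" where
  "proper_fun g \<longleftrightarrow> (\<forall>x. g x \<noteq> -\<infinity>) \<and> (\<exists>x. g x \<noteq> \<infinity>)"

definition convex_fun :: "('a::real_vector \<Rightarrow> ereal) \<Rightarrow> bool" where
  "convex_fun g \<longleftrightarrow> convex {(x, t::real). g x \<le> ereal t}"

definition lsc_fun :: "('a::topological_space \<Rightarrow> ereal) \<Rightarrow> bool" where
  "lsc_fun g \<longleftrightarrow> (\<forall>x. g x \<le> Liminf (at x) g)"

end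

theory Submission imports Defs begin

lemma line_deriv:
  fixes f :: "real^'n::finite \<Rightarrow> real"
  assumes "\<forall>y. (f has_derivative (\<lambda>h. grad y \<bullet> h)) (at y)"
  shows "((\<lambda>t. f (y + t *\<^sub>R d)) has_real_derivative (grad (y + t *\<^sub>R d) \<bullet> d)) (at t)"
proof -
  have 1: "((\<lambda>t. y + t *\<^sub>R d) has_derivative (\<lambda>h. h *\<^sub>R d)) (at t)"
    by (auto intro!: derivative_eq_intros)
  have "((\<lambda>t. f (y + t *\<^sub>R d)) has_derivative (\<lambda>h. grad (y + t *\<^sub>R d) \<bullet> (h *\<^sub>R d))) (at t)"
    using has_derivative_compose[OF 1] assms by blast
  then show ?thesis
    by (rule has_derivative_imp_has_field_derivative) (simp add: inner_scaleR_right)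
qed

lemma tangent_ineq:
  fixes f :: "real^'n::finite \<Rightarrow> real"
  assumes "convex_on UNIV f" "\<forall>y. (f has_derivative (\<lambda>h. grad y \<bullet> h)) (at y)"
  shows "f x \<ge> f y + grad y \<bullet> (x - y)"
proof -
  let ?p = "\<lambda>t. f (y + t *\<^sub>R (x - y))"
  have cv: "convex_on UNIV ?p"
  proof (rule convex_onI)
    fix t a b :: real assume t: "0 < t" "t < 1"
    have "y + ((1 - t) * a + t * b) *\<^sub>R (x - y) = (1 - t) *\<^sub>R (y + a *\<^sub>R (x - y)) + t *\<^sub>R (y + b *\<^sub>R (x - y))"
      by (simp add: algebra_simps)
    then show "?p ((1 - t) *\<^sub>R a + t *\<^sub>R b) \<le> (1 - t) * ?p a + t * ?p b"
      using convex_onD[OF assms(1), of t] t by simp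
  qed simp
  have "?p 1 - ?p 0 \<ge> (grad (y + 0 *\<^sub>R (x - y)) \<bullet> (x - y)) * (1 - 0)"
    by (rule convex_on_imp_above_tangent[OF cv]) (use line_deriv[OF assms(2), of y "x - y" 0] in auto)
  then show ?thesis by simp
qed

lemma bp_nth[simp]: "blockproj blk i y $ c = (if blk c = i then y $ c else 0)"
  by (simp add: blockproj_def)
lemma bp_add: "blockproj blk i (a + b) = blockproj blk i a + blockproj blk i b"
  by (simp add: vec_eq_iff)
lemma bp_diff: "blockproj blk i (a - b) = blockproj blk i a - blockproj blk i b"
  by (simp add: vec_eq_iff)
lemma bp_scale: "blockproj blk i (t *\<^sub>R a) = t *\<^sub>R blockproj blk i a"
  by (simp add: vec_eq_iff)
lemma bp_idem[simp]: "blockproj blk i (blockproj blk i a) = blockproj blk i a"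
  by (simp add: vec_eq_iff)
lemma bp_inner: "blockproj blk i a \<bullet> b = a \<bullet> blockproj blk i b"
  unfolding inner_vec_def by (intro sum.cong) auto
lemma bp_inner2: "blockproj blk i a \<bullet> b = blockproj blk i a \<bullet> blockproj blk i b"
  unfolding inner_vec_def by (intro sum.cong) auto

lemma block_descent:
  fixes f :: "real^'n::finite \<Rightarrow> real"
  assumes fg: "\<forall>y. (f has_derivative (\<lambda>h. grad y \<bullet> h)) (at y)"
    and Lip: "\<forall>z y. norm (blockproj blk i (grad (z + blockproj blk i y) - grad z))
                  \<le> Li * norm (blockproj blk i y)"
  shows "f (y + blockproj blk i v) \<le> f y + grad y \<bullet> blockproj blk i v + Li / 2 * (norm (blockproj blk i v))\<^sup>2"
proof -
  define d where "d = blockproj blk i v"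
  define h where "h = (\<lambda>t. f (y + t *\<^sub>R d) - t * (grad y \<bullet> d) - Li / 2 * t^2 * (norm d)^2)"
  have "h 1 \<le> h 0"
  proof (rule DERIV_nonpos_imp_nonincreasing[of 0 1 h])
    fix t :: real assume t: "0 \<le> t" "t \<le> 1"
    have D: "(h has_real_derivative (grad (y + t *\<^sub>R d) \<bullet> d - grad y \<bullet> d - Li / 2 * (2 * t) * (norm d)^2)) (at t)"
      unfolding h_def
      apply (intro derivative_eq_intros line_deriv[OF fg])
      apply (auto intro: line_deriv[OF fg])
      done
    have "(grad (y + t *\<^sub>R d) - grad y) \<bullet> d = blockproj blk i (grad (y + blockproj blk i (t *\<^sub>R v)) - grad y) \<bullet> d"
      by (simp add: d_def bp_scale bp_inner)
    also have "\<dots> \<le> norm (blockproj blk i (grad (y + blockproj blk i (t *\<^sub>R v)) - grad y)) * norm d"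
      by (rule norm_cauchy_schwarz)
    also have "\<dots> \<le> Li * norm (blockproj blk i (t *\<^sub>R v)) * norm d"
      using Lip by (intro mult_right_mono) auto
    also have "\<dots> = Li * t * (norm d)^2"
      using t by (simp add: d_def bp_scale power2_eq_square)
    finally have "grad (y + t *\<^sub>R d) \<bullet> d - grad y \<bullet> d - Li / 2 * (2 * t) * (norm d)^2 \<le> 0"
      by (simp add: inner_diff_left)
    with D show "\<exists>y. DERIV h t :> y \<and> y \<le> 0" by blast
  qed simp
  then show ?thesis by (simp add: h_def d_def)
qed

lemma grad_path:
  fixes grad :: "real^'n::finite \<Rightarrow> real^'n"
  assumes "finite S" "\<forall>s\<in>S. B s < m \<and> blockproj blk (B s) (D s) = D s"
    and Lip_r: "\<forall>i<m. \<forall>z y. norm (grad (z + blockproj blk i y) - grad z) \<le> Lr * norm (blockproj blk i y)"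
  shows "norm (grad (y + (\<Sum>s\<in>S. D s)) - grad y) \<le> Lr * (\<Sum>s\<in>S. norm (D s))"
  using assms(1,2)
proof (induction S arbitrary: y rule: finite_induct)
  case empty then show ?case by simp
next
  case (insert a S)
  have IH: "norm (grad ((y + D a) + (\<Sum>s\<in>S. D s)) - grad (y + D a)) \<le> Lr * (\<Sum>s\<in>S. norm (D s))"
    using insert by auto
  have 1: "norm (grad (y + D a) - grad y) \<le> Lr * norm (D a)"
    using Lip_r insert.prems by (metis insertI1)
  have "norm (grad (y + (\<Sum>s\<in>insert a S. D s)) - grad y)
     = norm ((grad ((y + D a) + (\<Sum>s\<in>S. D s)) - grad (y + D a)) + (grad (y + D a) - grad y))"
    using insert.hyps by (simp add: add.assoc)
  also have "\<dots> \<le> norm (grad ((y + D a) + (\<Sum>s\<in>S. D s)) - grad (y + D a)) + norm (grad (y + D a) - grad y)"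
    by (rule norm_triangle_ineq)
  also have "\<dots> \<le> Lr * (\<Sum>s\<in>insert a S. norm (D s))"
    using IH 1 insert.hyps by (simp add: distrib_left)
  finally show ?case .
qed

lemma path_descent:
  fixes f :: "real^'n::finite \<Rightarrow> real"
  assumes "finite S" "\<forall>s\<in>S. B s < m \<and> blockproj blk (B s) (D s) = D s"
    and fg: "\<forall>y. (f has_derivative (\<lambda>h. grad y \<bullet> h)) (at y)"
    and Lip_i: "\<forall>i<m. \<forall>z y. norm (blockproj blk i (grad (z + blockproj blk i y) - grad z))
                  \<le> L i * norm (blockproj blk i y)"
    and Lip_r: "\<forall>i<m. \<forall>z y. norm (grad (z + blockproj blk i y) - grad z) \<le> Lr * norm (blockproj blk i y)"
    and Lr: "Lr \<ge> 0"
  shows "f (y + (\<Sum>s\<in>S. D s)) \<le> f y + grad y \<bullet> (\<Sum>s\<in>S. D s)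
           + (\<Sum>s\<in>S. L (B s) / 2 * (norm (D s))\<^sup>2) + Lr / 2 * (\<Sum>s\<in>S. norm (D s))\<^sup>2"
  using assms(1,2)
proof (induction S arbitrary: y rule: finite_induct)
  case empty then show ?case by simp
next
  case (insert a S)
  let ?S = "\<Sum>s\<in>S. D s" and ?N = "\<Sum>s\<in>S. norm (D s)"
  have IH: "f ((y + D a) + ?S) \<le> f (y + D a) + grad (y + D a) \<bullet> ?S
           + (\<Sum>s\<in>S. L (B s) / 2 * (norm (D s))\<^sup>2) + Lr / 2 * ?N\<^sup>2"
    using insert by auto
  have Ba: "B a < m" "blockproj blk (B a) (D a) = D a" using insert.prems by auto
  have 1: "f (y + D a) \<le> f y + grad y \<bullet> D a + L (B a) / 2 * (norm (D a))\<^sup>2"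
    using block_descent[OF fg, of blk "B a" "L (B a)" y "D a"] Lip_i Ba by simp
  have 2: "norm (grad (y + D a) - grad y) \<le> Lr * norm (D a)"
    using Lip_r Ba by metis
  have "(grad (y + D a) - grad y) \<bullet> ?S \<le> norm (grad (y + D a) - grad y) * norm ?S"
    by (rule norm_cauchy_schwarz)
  also have "\<dots> \<le> Lr * norm (D a) * ?N"
    using 2 norm_sum[of D S] Lr by (intro mult_mono) auto
  finally have 3: "grad (y + D a) \<bullet> ?S \<le> grad y \<bullet> ?S + Lr * norm (D a) * ?N"
    by (simp add: inner_diff_left)
  have 4: "Lr / 2 * ?N\<^sup>2 + Lr * norm (D a) * ?N \<le> Lr / 2 * (norm (D a) + ?N)\<^sup>2"
    using Lr by (simp add: power2_eq_square algebra_simps)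
  have "f (y + (\<Sum>s\<in>insert a S. D s)) = f ((y + D a) + ?S)"
    using insert.hyps by (simp add: add.assoc)
  also have "\<dots> \<le> f y + grad y \<bullet> (\<Sum>s\<in>insert a S. D s)
           + (\<Sum>s\<in>insert a S. L (B s) / 2 * (norm (D s))\<^sup>2) + Lr / 2 * (\<Sum>s\<in>insert a S. norm (D s))\<^sup>2"
    using IH 1 3 4 insert.hyps by (simp add: inner_add_right)
  finally show ?case .
qed

lemma sym_inner:
  fixes P :: "real^'n::finite^'n"
  assumes "transpose P = P"
  shows "v \<bullet> (P *v u) = u \<bullet> (P *v v)"
proof -
  have "v \<bullet> (P *v u) = (v v* P) \<bullet> u" by (simp add: dot_lmul_matrix)
  also have "v v* P = transpose P *v v" by simp
  finally show ?thesis using assms by (simp add: inner_commute)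
qed

lemma qf_add:
  fixes P :: "real^'n::finite^'n"
  assumes "transpose P = P"
  shows "qf P (u + v) = qf P u + 2 * (u \<bullet> (P *v v)) + qf P v"
  using sym_inner[OF assms, of v u]
  by (simp add: qf_def matrix_vector_right_distrib inner_add_left inner_add_right)

lemma qf_scale: "qf P (t *\<^sub>R u) = t^2 * qf P u"
  by (simp add: qf_def matrix_vector_mult_scaleR power2_eq_square)

lemma le_of_small:
  fixes a b c :: real
  assumes "\<And>t. 0 < t \<Longrightarrow> t < 1 \<Longrightarrow> a \<le> b + t * c"
  shows "a \<le> b"
proof (rule ccontr)
  assume "\<not> a \<le> b"
  hence ab: "a > b" by simp
  have "a \<le> b + (1/2) * c" using assms[of "1/2"] by simp
  with ab have c: "c > 0" by simp
  define t where "t = min (1/2) ((a - b) / (2 * c))"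
  have t: "0 < t" "t < 1" using ab c by (auto simp: t_def)
  have "t * c \<le> (a - b) / (2 * c) * c" using c by (intro mult_right_mono) (auto simp: t_def)
  also have "\<dots> = (a - b) / 2" using c by simp
  finally have "b + t * c < a" using ab by simp
  with assms[OF t] show False by simp
qed

lemma three_point:
  fixes gj :: "real^'n::finite \<Rightarrow> ereal" and P :: "real^'n^'n"
  assumes conv: "convex_fun gj"
    and mn: "\<forall>z. (\<forall>c. blk c \<noteq> j \<longrightarrow> z $ c = xk $ c) \<longrightarrow>
        ereal (cc \<bullet> X + 1/2 * qf P (blockproj blk j (X - xk))) + gj X
        \<le> ereal (cc \<bullet> z + 1/2 * qf P (blockproj blk j (z - xk))) + gj z"
    and Xoff: "\<forall>c. blk c \<noteq> j \<longrightarrow> X $ c = xk $ c"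
    and zoff: "\<forall>c. blk c \<noteq> j \<longrightarrow> z $ c = xk $ c"
    and fa: "gj X = ereal a" and fb: "gj z = ereal b"
    and Psym: "transpose P = P"
  shows "a + cc \<bullet> (X - z) \<le> b + 1/2 * qf P (blockproj blk j (z - xk))
           - 1/2 * qf P (blockproj blk j (X - xk)) - 1/2 * qf P (blockproj blk j (z - X))"
proof -
  define u where "u = blockproj blk j (X - xk)"
  define w where "w = blockproj blk j (z - X)"
  have key: "a \<le> cc \<bullet> (z - X) + u \<bullet> (P *v w) + b"
  proof (rule le_of_small)
    fix t :: real assume t: "0 < t" "t < 1"
    define zt where "zt = (1 - t) *\<^sub>R X + t *\<^sub>R z"
    have ztoff: "\<forall>c. blk c \<noteq> j \<longrightarrow> zt $ c = xk $ c"
      using Xoff zoff by (simp add: zt_def algebra_simps)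
    have "((1 - t) *\<^sub>R (X, a) + t *\<^sub>R (z, b)) \<in> {(x, s::real). gj x \<le> ereal s}"
      using conv fa fb t unfolding convex_fun_def
      by (intro convexD[where s="{(x, s::real). gj x \<le> ereal s}"]) auto
    hence g1: "gj zt \<le> ereal ((1 - t) * a + t * b)" by (simp add: zt_def)
    have bpz: "blockproj blk j (zt - xk) = u + t *\<^sub>R w"
      by (simp add: u_def w_def zt_def vec_eq_iff algebra_simps)
    have Q: "qf P (u + t *\<^sub>R w) = qf P u + 2 * t * (u \<bullet> (P *v w)) + t^2 * qf P w"
      by (simp add: qf_add[OF Psym] qf_scale matrix_vector_mult_scaleR)
    have "ereal (cc \<bullet> X + 1/2 * qf P u) + ereal a
        \<le> ereal (cc \<bullet> zt + 1/2 * qf P (u + t *\<^sub>R w)) + gj zt"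
      using mn ztoff fa bpz by (auto simp: u_def)
    also have "\<dots> \<le> ereal (cc \<bullet> zt + 1/2 * qf P (u + t *\<^sub>R w)) + ereal ((1 - t) * a + t * b)"
      using g1 by (rule add_left_mono)
    finally have R: "cc \<bullet> X + 1/2 * qf P u + a \<le> cc \<bullet> zt + 1/2 * qf P (u + t *\<^sub>R w) + ((1 - t) * a + t * b)"
      by simp
    have czt: "cc \<bullet> zt = cc \<bullet> X + t * (cc \<bullet> (z - X))"
      by (simp add: zt_def inner_add_right inner_diff_right algebra_simps)
    have "t * a \<le> t * (cc \<bullet> (z - X) + u \<bullet> (P *v w) + b + t * (1/2 * qf P w))"
      using R unfolding czt Q by (simp add: algebra_simps power2_eq_square)
    then show "a \<le> cc \<bullet> (z - X) + u \<bullet> (P *v w) + b + t * (1/2 * qf P w)"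
      using t by simp
  qed
  have "blockproj blk j (z - xk) = u + w"
    by (simp add: u_def w_def bp_diff algebra_simps)
  hence "qf P (blockproj blk j (z - xk)) = qf P u + 2 * (u \<bullet> (P *v w)) + qf P w"
    by (simp add: qf_add[OF Psym])
  then show ?thesis using key unfolding u_def w_def by (simp add: inner_diff_right algebra_simps)
qed

lemma bp_sum:
  assumes "\<forall>c. blk c < m"
  shows "(\<Sum>j<m. blockproj blk j y) = y"
proof -
  have "\<And>c. (\<Sum>j<m. if blk c = j then y $ c else 0) = y $ c"
    using assms by (simp add: sum.delta')
  then show ?thesis by (simp add: vec_eq_iff sum_component)
qed

lemma bp_normsq:
  assumes "\<forall>c. blk c < m"
  shows "(\<Sum>j<m. (norm (blockproj blk j y))\<^sup>2) = (norm y)\<^sup>2"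
proof -
  have nb: "\<And>j. (norm (blockproj blk j y))\<^sup>2 = (\<Sum>c\<in>UNIV. if blk c = j then (y $ c)^2 else 0)"
    unfolding power2_norm_eq_inner inner_vec_def by (intro sum.cong) (auto simp: power2_eq_square)
  have "(\<Sum>j<m. (norm (blockproj blk j y))\<^sup>2) = (\<Sum>j<m. \<Sum>c\<in>UNIV. if blk c = j then (y $ c)^2 else 0)"
    using nb by simp
  also have "\<dots> = (\<Sum>c\<in>UNIV. \<Sum>j<m. if blk c = j then (y $ c)^2 else 0)"
    by (rule sum.swap)
  also have "\<dots> = (\<Sum>c\<in>UNIV. (y $ c)^2)"
    using assms by (simp add: sum.delta')
  also have "\<dots> = (norm y)\<^sup>2"
    unfolding power2_norm_eq_inner inner_vec_def by (simp add: power2_eq_square)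
  finally show ?thesis .
qed

lemma sum_minus_one:
  fixes h :: "nat \<Rightarrow> real"
  shows "(\<Sum>j<m. \<Sum>l\<in>{..<m} - {j}. h l) = (real m - 1) * (\<Sum>l<m. h l)"
proof -
  have "(\<Sum>j<m. \<Sum>l\<in>{..<m} - {j}. h l) = (\<Sum>j<m. (\<Sum>l<m. h l) - h j)"
    by (intro sum.cong refl) (simp add: sum_diff1)
  also have "\<dots> = (real m - 1) * (\<Sum>l<m. h l)"
    by (simp add: sum_subtractf algebra_simps)
  finally show ?thesis .
qed

lemma P_block:
  fixes P :: "real^'n::finite^'n"
  assumes "\<forall>c c'. blk c \<noteq> blk c' \<longrightarrow> P $ c $ c' = 0"
    and "blockproj blk j u = u"
  shows "blockproj blk j (P *v u) = P *v u"
proof -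
  have u: "\<And>c. blk c \<noteq> j \<Longrightarrow> u $ c = 0" using assms(2) by (metis bp_nth)
  have "\<And>c. blk c \<noteq> j \<Longrightarrow> (P *v u) $ c = 0"
    unfolding matrix_vector_mult_def using assms(1) u
    by (auto intro!: sum.neutral) (metis)
  then show ?thesis by (simp add: vec_eq_iff)
qed

lemma qf_swap: "qf P (a - b) = qf P (b - a)"
proof -
  have "b - a = (-1::real) *\<^sub>R (a - b)" by simp
  then show ?thesis by (simp only: qf_scale) simp
qed

lemma qf_decomp:
  fixes P :: "real^'n::finite^'n"
  assumes Pb: "\<forall>c c'. blk c \<noteq> blk c' \<longrightarrow> P $ c $ c' = 0" and Ps: "transpose P = P"
    and u: "blockproj blk j u = u"
  shows "qf P (w + u) = qf P w - qf P (blockproj blk j w) + qf P (blockproj blk j (w + u))"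
proof -
  have "blockproj blk j w \<bullet> (P *v u) = w \<bullet> (P *v u)"
    using P_block[OF Pb u] by (metis bp_inner)
  then show ?thesis using u by (simp add: bp_add qf_add[OF Ps])
qed

lemma blkdiagL_mv: "(blkdiagL blk L *v u) $ i = L (blk i) * u $ i"
proof -
  have "(blkdiagL blk L *v u) $ i = (\<Sum>j\<in>UNIV. (if i = j then L (blk i) * u $ j else 0))"
  proof -
    have "(blkdiagL blk L *v u) $ i = (\<Sum>j\<in>UNIV. (if i = j then L (blk i) else 0) * u $ j)"
      by (simp add: matrix_vector_mult_def blkdiagL_def)
    also have "\<dots> = (\<Sum>j\<in>UNIV. (if i = j then L (blk i) * u $ j else 0))"
      by (intro sum.cong) auto
    finally show ?thesis .
  qed
  then show ?thesis by simp
qed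

lemma qf_M:
  fixes P :: "real^'n::finite^'n" and A :: "real^'n^'q::finite"
  assumes u: "blockproj blk j u = u"
  shows "qf (P - blkdiagL blk L - c *\<^sub>R mat 1 - beta *\<^sub>R (transpose A ** A)) u
       = qf P u - L j * (norm u)\<^sup>2 - c * (norm u)\<^sup>2 - beta * (norm (A *v u))\<^sup>2"
proof -
  have u0: "\<And>i. blk i \<noteq> j \<Longrightarrow> u $ i = 0" using u by (metis bp_nth)
  have 1: "u \<bullet> (blkdiagL blk L *v u) = L j * (norm u)\<^sup>2"
  proof -
    have "u \<bullet> (blkdiagL blk L *v u) = (\<Sum>i\<in>UNIV. L (blk i) * (u $ i * u $ i))"
      by (simp add: inner_vec_def blkdiagL_mv algebra_simps)
    also have "\<dots> = (\<Sum>i\<in>UNIV. L j * (u $ i * u $ i))"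
      by (intro sum.cong refl, rename_tac i, case_tac "blk i = j") (auto simp: u0)
    finally show ?thesis by (simp add: power2_norm_eq_inner inner_vec_def sum_distrib_left)
  qed
  have 2: "u \<bullet> ((transpose A ** A) *v u) = (norm (A *v u))\<^sup>2"
  proof -
    have "u \<bullet> ((transpose A ** A) *v u) = u \<bullet> (transpose A *v (A *v u))"
      by (simp add: matrix_vector_mul_assoc)
    also have "\<dots> = ((A *v u) v* A) \<bullet> u" by (simp add: inner_commute)
    also have "\<dots> = (A *v u) \<bullet> (A *v u)" by (simp add: dot_lmul_matrix)
    finally show ?thesis by (simp add: power2_norm_eq_inner)
  qed
  show ?thesis
    unfolding qf_def
    using 1 2
    by (simp add: matrix_vector_mult_diff_rdistrib scaleR_matrix_vector_assoc[symmetric]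
        inner_diff_right power2_norm_eq_inner)
qed

lemma qf_L_nonneg:
  assumes "\<forall>c. blk c < m" "\<forall>i<m. L i > 0"
  shows "qf (blkdiagL blk L) u \<ge> 0"
proof -
  have "qf (blkdiagL blk L) u = (\<Sum>i\<in>UNIV. L (blk i) * (u $ i)^2)"
    by (simp add: qf_def inner_vec_def blkdiagL_mv algebra_simps power2_eq_square)
  also have "\<dots> \<ge> 0" using assms by (intro sum_nonneg) (simp add: less_imp_le)
  finally show ?thesis .
qed

lemma qf_L_block:
  assumes u: "blockproj blk j u = u"
  shows "qf (blkdiagL blk L) u = L j * (norm u)\<^sup>2"
proof -
  have u0: "\<And>i. blk i \<noteq> j \<Longrightarrow> u $ i = 0" using u by (metis bp_nth)
  have "qf (blkdiagL blk L) u = (\<Sum>i\<in>UNIV. L (blk i) * (u $ i * u $ i))"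
    by (simp add: qf_def inner_vec_def blkdiagL_mv algebra_simps)
  also have "\<dots> = (\<Sum>i\<in>UNIV. L j * (u $ i * u $ i))"
    by (intro sum.cong refl, rename_tac i, case_tac "blk i = j") (auto simp: u0)
  finally show ?thesis by (simp add: power2_norm_eq_inner inner_vec_def sum_distrib_left)
qed

lemma young:
  fixes a b c :: real
  assumes "c > 0"
  shows "a * b \<le> a\<^sup>2 / (2 * c) + c / 2 * b\<^sup>2"
proof -
  have "a\<^sup>2 / (2 * c) + c / 2 * b\<^sup>2 - a * b = (a - c * b)\<^sup>2 / (2 * c)"
    using assms by (simp add: field_simps power2_eq_square)
  moreover have "(a - c * b)\<^sup>2 / (2 * c) \<ge> 0" using assms by simp
  ultimately show ?thesis by linarith
qed

theorem mainTheorem10: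
  fixes blk :: "'n::finite \<Rightarrow> nat" and m :: nat
    and f :: "real^'n \<Rightarrow> real" and grad :: "real^'n \<Rightarrow> real^'n"
    and g :: "nat \<Rightarrow> real^'n \<Rightarrow> ereal"
    and A :: "real^'n^'q::finite" and b :: "real^'q"
    and L :: "nat \<Rightarrow> real" and Lr :: real
    and P :: "real^'n^'n"
    and beta rho alpha :: real and tau :: nat
    and xs :: "nat \<Rightarrow> real^'n" and r lam :: "nat \<Rightarrow> real^'q"
    and xhat :: "nat \<Rightarrow> real^'n" and J :: "nat \<Rightarrow> nat set" and idx :: "nat \<Rightarrow> nat"
    and k :: nat and X :: "nat \<Rightarrow> real^'n" and x :: "real^'n"
    and F :: "real^'n \<Rightarrow> ereal" and R Lam :: "nat \<Rightarrow> real^'q"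
    and Lc kappa :: real
  defines "F \<equiv> (\<lambda>z. ereal (f z) + (\<Sum>i<m. g i z))"
    and "Lc \<equiv> Max (L ` {..<m})"
    and "kappa \<equiv> Lr / Lc"
    and "R \<equiv> (\<lambda>j. r k + A *v blockproj blk j (X j - xs k))"
    and "Lam \<equiv> (\<lambda>j. lam k - rho *\<^sub>R R j)"
  assumes blocks: "m \<ge> 1" "\<forall>c. blk c < m" "\<forall>i<m. \<exists>c. blk c = i"
    (* f convex, continuously differentiable with gradient grad *)
    and f_convex: "convex_on UNIV f"
    and f_grad: "\<forall>y. (f has_derivative (\<lambda>h. grad y \<bullet> h)) (at y)"
    and grad_cont: "continuous_on UNIV grad"
    (* each g_i proper, convex, lsc, and a function of block i only *)
    and g_block: "\<forall>i<m. \<forall>z. g i z = g i (blockproj blk i z)"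
    and g_proper: "\<forall>i<m. proper_fun (g i)"
    and g_convex: "\<forall>i<m. convex_fun (g i)"
    and g_lsc: "\<forall>i<m. lsc_fun (g i)"
    (* gradient Lipschitz continuity *)
    and L_pos: "\<forall>i<m. L i > 0"
    and Lip_i: "\<forall>i<m. \<forall>z y. norm (blockproj blk i (grad (z + blockproj blk i y) - grad z))
                  \<le> L i * norm (blockproj blk i y)"
    and Lip_r: "\<forall>i<m. \<forall>z y. norm (grad (z + blockproj blk i y) - grad z)
                  \<le> Lr * norm (blockproj blk i y)"
    (* P = blkdiag(P_1,...,P_m), each P_i symmetric PSD *)
    and P_blockdiag: "\<forall>c c'. blk c \<noteq> blk c' \<longrightarrow> P $ c $ c' = 0"
    and P_sym: "transpose P = P"
    and P_psd: "\<forall>z. qf P z \<ge> 0"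
    and params: "beta > 0" "rho > 0" "alpha > 0"
    (* Algorithm 2: initialization *)
    and init: "r 0 = A *v xs 0 - b" "lam 0 = 0"
    (* bounded delay, for iterations 0..k *)
    and delay: "\<forall>d\<le>k. J d \<subseteq> {d - tau..<d} \<and>
                  xhat d = xs d + (\<Sum>e\<in>J d. xs e - xs (e + 1))"
    (* Algorithm 2: the iterations d < k (history) *)
    and hist_idx: "\<forall>d<k. idx d < m"
    and hist_other: "\<forall>d<k. \<forall>c. blk c \<noteq> idx d \<longrightarrow> xs (d + 1) $ c = xs d $ c"
    and hist_min: "\<forall>d<k. \<forall>z. (\<forall>c. blk c \<noteq> idx d \<longrightarrow> z $ c = xs d $ c) \<longrightarrow>
        ereal (blockproj blk (idx d) (grad (xhat d) - transpose A *v (lam d - beta *\<^sub>R r d)) \<bullet> xs (d + 1)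
               + 1/2 * qf P (blockproj blk (idx d) (xs (d + 1) - xs d))) + g (idx d) (xs (d + 1))
        \<le> ereal (blockproj blk (idx d) (grad (xhat d) - transpose A *v (lam d - beta *\<^sub>R r d)) \<bullet> z
               + 1/2 * qf P (blockproj blk (idx d) (z - xs d))) + g (idx d) z"
    and hist_r: "\<forall>d<k. r (d + 1) = r d + A *v blockproj blk (idx d) (xs (d + 1) - xs d)"
    and hist_lam: "\<forall>d<k. lam (d + 1) = lam d - rho *\<^sub>R r (d + 1)"
    (* iteration k: X j is x^{k+1} when i_k = j *)
    and step_other: "\<forall>j<m. \<forall>c. blk c \<noteq> j \<longrightarrow> X j $ c = xs k $ c"
    and step_min: "\<forall>j<m. \<forall>z. (\<forall>c. blk c \<noteq> j \<longrightarrow> z $ c = xs k $ c) \<longrightarrow>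
        ereal (blockproj blk j (grad (xhat k) - transpose A *v (lam k - beta *\<^sub>R r k)) \<bullet> X j
               + 1/2 * qf P (blockproj blk j (X j - xs k))) + g j (X j)
        \<le> ereal (blockproj blk j (grad (xhat k) - transpose A *v (lam k - beta *\<^sub>R r k)) \<bullet> z
               + 1/2 * qf P (blockproj blk j (z - xs k))) + g j z"
    (* the comparison point *)
    and x_feas: "A *v x = b"
    and x_dom: "F x < \<infinity>"
  shows
    "ereal (1 / real m) * (\<Sum>j<m. F (X j) - F x
         + ereal (- (Lam j \<bullet> R j) + (beta - rho) * (norm (R j))\<^sup>2 - beta / 2 * (norm (R j))\<^sup>2
                  + 1/2 * qf P (X j - x)))
     + ereal (1/2 * (1 / real m) * (\<Sum>j<m. qf (P - blkdiagL blk L - (alpha * Lc) *\<^sub>R mat 1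
                                           - beta *\<^sub>R (transpose A ** A)) (X j - xs k))
         - (kappa * Lr * real tau / alpha + 2 * Lr * real tau) / (2 * real m)
             * (\<Sum>d\<in>{k - tau..<k}. (norm (xs (d + 1) - xs d))\<^sup>2)
         - 1 / (2 * real m) * (\<Sum>d\<in>{k - tau..<k}. qf (blkdiagL blk L) (xs (d + 1) - xs d)))
     \<le> ereal (1 - 1 / real m) * (F (xs k) - F x + ereal (- (lam k \<bullet> r k) + beta * (norm (r k))\<^sup>2))
       + ereal (- beta / 2 * (norm (r k))\<^sup>2 + 1/2 * qf P (xs k - x))"
proof -
  have mpos: "real m > 0" using blocks(1) by simp
  have Lc_pos: "Lc > 0"
  proof -
    have "L 0 \<le> Lc" unfolding Lc_def using blocks(1) by (intro Max_ge) auto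
    with L_pos blocks(1) show ?thesis by fastforce
  qed
  have Lr_nn: "Lr \<ge> 0"
  proof -
    obtain c where c: "blk c = 0" using blocks by blast
    define y :: "real^'n" where "y = axis c 1"
    have hy: "blockproj blk 0 y = y" by (simp add: y_def vec_eq_iff axis_def c)
    have "0 \<le> Lr * norm (blockproj blk 0 y)"
    proof -
      have "norm (grad (xs 0 + blockproj blk 0 y) - grad (xs 0)) \<le> Lr * norm (blockproj blk 0 y)"
        using Lip_r blocks(1) by auto
      then show ?thesis using norm_ge_zero order_trans by blast
    qed
    moreover have "norm (blockproj blk 0 y) > 0" using hy by (simp add: y_def)
    ultimately show ?thesis by (simp add: zero_le_mult_iff)
  qed
  have dsupp: "\<And>d. d < k \<Longrightarrow> blockproj blk (idx d) (xs (d + 1) - xs d) = xs (d + 1) - xs d"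
    using hist_other by (auto simp: vec_eq_iff)
  have Xsupp: "\<And>j. j < m \<Longrightarrow> blockproj blk j (X j - xs k) = X j - xs k"
    using step_other by (auto simp: vec_eq_iff)
  have r_inv: "\<And>d. d \<le> k \<Longrightarrow> r d = A *v xs d - b"
  proof -
    fix d show "d \<le> k \<Longrightarrow> r d = A *v xs d - b"
    proof (induction d)
      case 0 then show ?case using init by simp
    next
      case (Suc d)
      then have "r (d + 1) = r d + A *v (xs (d + 1) - xs d)"
        using hist_r dsupp by simp
      with Suc show ?case by (simp add: matrix_vector_mult_diff_distrib)
    qed
  qed
  have gnm: "\<And>l z. l < m \<Longrightarrow> g l z \<noteq> -\<infinity>"
    using g_proper unfolding proper_fun_def by blast
  have gx_fin: "\<And>l. l < m \<Longrightarrow> \<bar>g l x\<bar> \<noteq> \<infinity>"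
  proof -
    fix l assume l: "l < m"
    have "(\<Sum>i<m. g i x) \<noteq> \<infinity>"
      using x_dom unfolding F_def by auto
    hence "g l x \<noteq> \<infinity>" using l by (auto simp: sum_Pinfty)
    with gnm[OF l] show "\<bar>g l x\<bar> \<noteq> \<infinity>" by auto
  qed
  define gx where "gx = (\<lambda>l. real_of_ereal (g l x))"
  have gx_eq: "\<And>l. l < m \<Longrightarrow> g l x = ereal (gx l)"
    using gx_fin by (simp add: gx_def ereal_real')
  define z where "z = (\<lambda>j. xs k + blockproj blk j (x - xs k))"
  have zoff: "\<And>j. \<forall>c. blk c \<noteq> j \<longrightarrow> z j $ c = xs k $ c"
    by (simp add: z_def)
  have gz: "\<And>j. j < m \<Longrightarrow> g j (z j) = g j x"
  proof -
    fix j assume j: "j < m"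
    have "blockproj blk j (z j) = blockproj blk j x" by (simp add: z_def vec_eq_iff)
    then show "g j (z j) = g j x" using g_block j by metis
  qed
  define v where "v = lam k - beta *\<^sub>R r k"
  define gv where "gv = grad (xhat k) - transpose A *v v"
  have gX_fin: "\<And>j. j < m \<Longrightarrow> \<bar>g j (X j)\<bar> \<noteq> \<infinity>"
  proof -
    fix j assume j: "j < m"
    have "ereal (blockproj blk j gv \<bullet> X j + 1/2 * qf P (blockproj blk j (X j - xs k))) + g j (X j)
        \<le> ereal (blockproj blk j gv \<bullet> z j + 1/2 * qf P (blockproj blk j (z j - xs k))) + g j (z j)"
      using step_min j zoff unfolding gv_def v_def by blast
    also have "\<dots> < \<infinity>" using gz[OF j] gx_eq[OF j] by simp
    finally have "g j (X j) \<noteq> \<infinity>" by auto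
    with gnm[OF j] show "\<bar>g j (X j)\<bar> \<noteq> \<infinity>" by auto
  qed
  define gX where "gX = (\<lambda>l. real_of_ereal (g l (X l)))"
  have gX_eq: "\<And>l. l < m \<Longrightarrow> g l (X l) = ereal (gX l)"
    using gX_fin by (simp add: gX_def ereal_real')
  define D where "D = (\<lambda>j. X j - xs k)"
  define e where "e = grad (xs k) - grad (xhat k)"
  define M where "M = P - blkdiagL blk L - (alpha * Lc) *\<^sub>R mat 1 - beta *\<^sub>R (transpose A ** A)"
  define tAv where "tAv = transpose A *v v"
  have perj: "\<And>j. j < m \<Longrightarrow>
     f (X j) + gX j + 1/2 * qf P (X j - x) + 1/2 * qf M (D j)
       + (- (Lam j \<bullet> R j) + (beta - rho) * (norm (R j))\<^sup>2 - beta / 2 * (norm (R j))\<^sup>2)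
     \<le> f (xs k) + gx j + (norm (blockproj blk j e))\<^sup>2 / (2 * (alpha * Lc))
        - grad (xhat k) \<bullet> blockproj blk j (xs k - x) + tAv \<bullet> blockproj blk j (xs k - x)
        + 1/2 * qf P (xs k - x) - (lam k \<bullet> r k) + beta / 2 * (norm (r k))\<^sup>2"
  proof -
    fix j assume j: "j < m"
    have DS: "blockproj blk j (D j) = D j" using Xsupp[OF j] by (simp add: D_def)
    have mn: "\<forall>z. (\<forall>c. blk c \<noteq> j \<longrightarrow> z $ c = xs k $ c) \<longrightarrow>
        ereal (blockproj blk j gv \<bullet> X j + 1/2 * qf P (blockproj blk j (X j - xs k))) + g j (X j)
        \<le> ereal (blockproj blk j gv \<bullet> z + 1/2 * qf P (blockproj blk j (z - xs k))) + g j z"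
      using step_min j unfolding gv_def v_def by blast
    have Xoff: "\<forall>c. blk c \<noteq> j \<longrightarrow> X j $ c = xs k $ c" using step_other j by blast
    have T0: "gX j + blockproj blk j gv \<bullet> (X j - z j) \<le> gx j + 1/2 * qf P (blockproj blk j (z j - xs k))
           - 1/2 * qf P (blockproj blk j (X j - xs k)) - 1/2 * qf P (blockproj blk j (z j - X j))"
      by (rule three_point[OF g_convex[rule_format, OF j] mn Xoff zoff
            gX_eq[OF j] _ P_sym]) (simp add: gz[OF j] gx_eq[OF j])
    have e1: "blockproj blk j gv \<bullet> (X j - z j) = gv \<bullet> blockproj blk j (X j - x)"
    proof -
      have "blockproj blk j (X j - z j) = blockproj blk j (X j - x)" by (simp add: z_def vec_eq_iff)
      then show ?thesis by (simp add: bp_inner)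
    qed
    have e2: "blockproj blk j (z j - xs k) = (-1::real) *\<^sub>R blockproj blk j (xs k - x)"
      by (simp add: z_def vec_eq_iff)
    have e3: "blockproj blk j (z j - X j) = (-1::real) *\<^sub>R blockproj blk j (X j - x)"
      by (simp add: z_def vec_eq_iff)
    have T: "gX j + gv \<bullet> blockproj blk j (X j - x) \<le> gx j + 1/2 * qf P (blockproj blk j (xs k - x))
           - 1/2 * qf P (D j) - 1/2 * qf P (blockproj blk j (X j - x))"
      using T0 unfolding e1 e2 e3 qf_scale Xsupp[OF j] by (simp add: D_def)
    have Dd: "f (X j) \<le> f (xs k) + grad (xs k) \<bullet> D j + 1/2 * (L j * (norm (D j))\<^sup>2)"
      using block_descent[OF f_grad, of blk j "L j" "xs k" "D j"] Lip_i j DS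
      by (simp add: D_def)
    have Pd: "qf P (X j - x) = qf P (xs k - x) - qf P (blockproj blk j (xs k - x)) + qf P (blockproj blk j (X j - x))"
      using qf_decomp[OF P_blockdiag P_sym DS, of "xs k - x"] by (simp add: D_def)
    have Md: "qf M (D j) = qf P (D j) - L j * (norm (D j))\<^sup>2 - (alpha * Lc) * (norm (D j))\<^sup>2
                - beta * (norm (A *v D j))\<^sup>2"
      unfolding M_def by (rule qf_M[OF DS])
    have Yd: "e \<bullet> D j \<le> (norm (blockproj blk j e))\<^sup>2 / (2 * (alpha * Lc)) + (alpha * Lc) / 2 * (norm (D j))\<^sup>2"
    proof -
      have c: "alpha * Lc > 0" using params Lc_pos by simp
      have "e \<bullet> D j = blockproj blk j e \<bullet> D j" using DS by (metis bp_inner)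
      also have "\<dots> \<le> norm (blockproj blk j e) * norm (D j)" by (rule norm_cauchy_schwarz)
      also have "\<dots> \<le> (norm (blockproj blk j e))\<^sup>2 / (2 * (alpha * Lc)) + (alpha * Lc) / 2 * (norm (D j))\<^sup>2"
        by (rule young) (use c in simp)
      finally show ?thesis .
    qed
    have Sd: "gv \<bullet> blockproj blk j (X j - x) = grad (xhat k) \<bullet> D j + grad (xhat k) \<bullet> blockproj blk j (xs k - x)
              - tAv \<bullet> D j - tAv \<bullet> blockproj blk j (xs k - x)"
    proof -
      have "blockproj blk j (X j - x) = D j + blockproj blk j (xs k - x)"
        using Xoff by (simp add: D_def vec_eq_iff)
      then show ?thesis by (simp add: gv_def tAv_def inner_add_right inner_diff_left)
    qed
    have RD: "R j = r k + A *v D j" using Xsupp[OF j] by (simp add: R_def D_def)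
    have tA: "tAv \<bullet> D j = v \<bullet> (A *v D j)"
      by (simp add: tAv_def dot_lmul_matrix)
    have Ld: "tAv \<bullet> D j + (- (Lam j \<bullet> R j) + (beta - rho) * (norm (R j))\<^sup>2 - beta / 2 * (norm (R j))\<^sup>2)
             - beta / 2 * (norm (A *v D j))\<^sup>2 = - (lam k \<bullet> r k) + beta / 2 * (norm (r k))\<^sup>2"
      unfolding tA Lam_def RD v_def
      by (simp add: power2_norm_eq_inner inner_add_left inner_add_right inner_diff_left inner_diff_right
            inner_commute algebra_simps)
    have ed: "e \<bullet> D j = grad (xs k) \<bullet> D j - grad (xhat k) \<bullet> D j"
      by (simp add: e_def inner_diff_left)
    show "?thesis j"
      using T Dd Pd Md Yd Sd Ld ed by (simp add: algebra_simps)
  qed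
  define dl where "dl = (\<lambda>d. xs (d + 1) - xs d)"
  have Jk: "J k \<subseteq> {k - tau..<k}" and xh: "xhat k = xs k + (\<Sum>e\<in>J k. xs e - xs (e + 1))"
    using delay by auto
  have finJ: "finite (J k)" using Jk finite_subset by blast
  have cardJ: "real (card (J k)) \<le> real tau"
  proof -
    have "card (J k) \<le> card {k - tau..<k}" using Jk by (intro card_mono) auto
    also have "\<dots> \<le> tau" by simp
    finally show ?thesis by simp
  qed
  have Jprop: "\<forall>s\<in>J k. idx s < m \<and> blockproj blk (idx s) (dl s) = dl s"
    using Jk hist_idx dsupp by (auto simp: dl_def)
  have xk_eq: "xs k = xhat k + (\<Sum>d\<in>J k. dl d)"
  proof -
    have "(\<Sum>e\<in>J k. xs e - xs (e + 1)) = - (\<Sum>d\<in>J k. dl d)"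
      by (simp add: dl_def sum_negf[symmetric])
    then show ?thesis using xh by simp
  qed
  define NJ where "NJ = (\<Sum>d\<in>J k. norm (dl d))"
  define SJ where "SJ = (\<Sum>d\<in>J k. (norm (dl d))\<^sup>2)"
  define Sd where "Sd = (\<Sum>d\<in>{k - tau..<k}. (norm (xs (d + 1) - xs d))\<^sup>2)"
  define SL where "SL = (\<Sum>d\<in>{k - tau..<k}. qf (blkdiagL blk L) (xs (d + 1) - xs d))"
  have Edel: "f (xs k) \<le> f (xhat k) + grad (xhat k) \<bullet> (xs k - xhat k)
        + (\<Sum>d\<in>J k. L (idx d) / 2 * (norm (dl d))\<^sup>2) + Lr / 2 * NJ\<^sup>2"
    using path_descent[OF finJ Jprop f_grad Lip_i Lip_r Lr_nn, of "xhat k"] xk_eq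
    by (simp add: NJ_def)
  have tang: "f x \<ge> f (xhat k) + grad (xhat k) \<bullet> (x - xhat k)"
    by (rule tangent_ineq[OF f_convex f_grad])
  have enorm: "norm e \<le> Lr * NJ"
    using grad_path[OF finJ Jprop Lip_r, of "xhat k"] xk_eq by (simp add: e_def NJ_def)
  have Sd_nn: "Sd \<ge> 0" by (simp add: Sd_def sum_nonneg)
  have NJ2: "NJ\<^sup>2 \<le> real tau * Sd"
  proof -
    have "NJ\<^sup>2 \<le> SJ * real (card (J k))"
      unfolding NJ_def SJ_def by (rule sum_squared_le_sum_of_squares)
    also have "\<dots> \<le> Sd * real tau"
    proof (rule mult_mono)
      show "SJ \<le> Sd" unfolding SJ_def Sd_def dl_def
        using Jk by (intro sum_mono2) auto
    qed (use cardJ Sd_nn in \<open>auto simp: SJ_def sum_nonneg\<close>)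
    finally show ?thesis by (simp add: mult.commute)
  qed
  have LJ: "(\<Sum>d\<in>J k. L (idx d) / 2 * (norm (dl d))\<^sup>2) \<le> SL / 2"
  proof -
    have "(\<Sum>d\<in>J k. L (idx d) / 2 * (norm (dl d))\<^sup>2) = (\<Sum>d\<in>J k. qf (blkdiagL blk L) (dl d)) / 2"
      using Jprop unfolding sum_divide_distrib by (intro sum.cong) (auto simp: qf_L_block)
    also have "(\<Sum>d\<in>J k. qf (blkdiagL blk L) (dl d)) \<le> SL"
      unfolding SL_def dl_def using Jk qf_L_nonneg[OF blocks(2) L_pos]
      by (intro sum_mono2) auto
    finally show ?thesis by simp
  qed
  have e2: "(norm e)\<^sup>2 / (2 * (alpha * Lc)) \<le> (kappa * Lr * real tau / alpha) / 2 * Sd"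
  proof -
    have "(norm e)\<^sup>2 \<le> (Lr * NJ)\<^sup>2"
      using enorm by (intro power_mono) auto
    also have "\<dots> = Lr\<^sup>2 * NJ\<^sup>2" by (simp add: power_mult_distrib)
    also have "\<dots> \<le> Lr\<^sup>2 * (real tau * Sd)" using NJ2 by (intro mult_left_mono) auto
    finally have "(norm e)\<^sup>2 / (2 * (alpha * Lc)) \<le> Lr\<^sup>2 * (real tau * Sd) / (2 * (alpha * Lc))"
      using params Lc_pos by (intro divide_right_mono) auto
    also have "\<dots> = (kappa * Lr * real tau / alpha) / 2 * Sd"
      using params Lc_pos by (simp add: kappa_def power2_eq_square field_simps)
    finally show ?thesis .
  qed
  have delay_bound: "f (xs k) - f x - grad (xhat k) \<bullet> (xs k - x) + (norm e)\<^sup>2 / (2 * (alpha * Lc))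
      \<le> (kappa * Lr * real tau / alpha + 2 * Lr * real tau) / 2 * Sd + SL / 2"
  proof -
    have "grad (xhat k) \<bullet> (xs k - xhat k) - grad (xhat k) \<bullet> (x - xhat k) = grad (xhat k) \<bullet> (xs k - x)"
      by (simp add: inner_diff_right)
    moreover have "Lr / 2 * NJ\<^sup>2 \<le> Lr * real tau * Sd"
    proof -
      have "Lr / 2 * NJ\<^sup>2 \<le> Lr / 2 * (real tau * Sd)" using NJ2 Lr_nn by (intro mult_left_mono) auto
      also have "\<dots> \<le> Lr * real tau * Sd" using Lr_nn Sd_nn by (simp add: mult_nonneg_nonneg)
      finally show ?thesis .
    qed
    moreover have "(kappa * Lr * real tau / alpha + 2 * Lr * real tau) / 2 * Sd
        = (kappa * Lr * real tau / alpha) / 2 * Sd + Lr * real tau * Sd" by (simp add: algebra_simps)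
    ultimately show ?thesis using Edel tang LJ e2 by linarith
  qed
  define core where "core = (\<lambda>j. f (X j) + gX j + 1/2 * qf P (X j - x) + 1/2 * qf M (D j)
       + (- (Lam j \<bullet> R j) + (beta - rho) * (norm (R j))\<^sup>2 - beta / 2 * (norm (R j))\<^sup>2))"
  define EE where "EE = (norm e)\<^sup>2 / (2 * (alpha * Lc))"
  have vr: "tAv \<bullet> (xs k - x) = lam k \<bullet> r k - beta * (norm (r k))\<^sup>2"
  proof -
    have "tAv \<bullet> (xs k - x) = v \<bullet> (A *v (xs k - x))" by (simp add: tAv_def dot_lmul_matrix)
    also have "A *v (xs k - x) = r k" using r_inv[of k] x_feas by (simp add: matrix_vector_mult_diff_distrib)
    finally show ?thesis by (simp add: v_def inner_diff_left inner_diff_right power2_norm_eq_inner inner_commute)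
  qed
  have sumcore: "(\<Sum>j<m. core j) \<le> real m * (f (xs k) + 1/2 * qf P (xs k - x) - (lam k \<bullet> r k) + beta / 2 * (norm (r k))\<^sup>2)
      + (\<Sum>j<m. gx j) + EE - grad (xhat k) \<bullet> (xs k - x) + (lam k \<bullet> r k - beta * (norm (r k))\<^sup>2)"
  proof -
    have "(\<Sum>j<m. core j) \<le> (\<Sum>j<m. f (xs k) + gx j + (norm (blockproj blk j e))\<^sup>2 / (2 * (alpha * Lc))
        - grad (xhat k) \<bullet> blockproj blk j (xs k - x) + tAv \<bullet> blockproj blk j (xs k - x)
        + 1/2 * qf P (xs k - x) - (lam k \<bullet> r k) + beta / 2 * (norm (r k))\<^sup>2)"
      by (rule sum_mono) (use perj in \<open>simp add: core_def\<close>)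
    also have "\<dots> = real m * (f (xs k) + 1/2 * qf P (xs k - x) - (lam k \<bullet> r k) + beta / 2 * (norm (r k))\<^sup>2)
        + (\<Sum>j<m. gx j) + (\<Sum>j<m. (norm (blockproj blk j e))\<^sup>2) / (2 * (alpha * Lc))
        - grad (xhat k) \<bullet> (\<Sum>j<m. blockproj blk j (xs k - x)) + tAv \<bullet> (\<Sum>j<m. blockproj blk j (xs k - x))"
      by (simp add: sum.distrib sum_subtractf sum_divide_distrib inner_sum_right algebra_simps)
    also have "\<dots> = real m * (f (xs k) + 1/2 * qf P (xs k - x) - (lam k \<bullet> r k) + beta / 2 * (norm (r k))\<^sup>2)
      + (\<Sum>j<m. gx j) + EE - grad (xhat k) \<bullet> (xs k - x) + (lam k \<bullet> r k - beta * (norm (r k))\<^sup>2)"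
      by (simp add: bp_sum[OF blocks(2)] bp_normsq[OF blocks(2)] EE_def vr)
    finally show ?thesis .
  qed
  define gk where "gk = (\<lambda>l. real_of_ereal (g l (xs k)))"
  define Gk where "Gk = (\<Sum>l<m. gk l)"
  define Fxr where "Fxr = f x + (\<Sum>l<m. gx l)"
  define TT where "TT = (\<lambda>j. - (Lam j \<bullet> R j) + (beta - rho) * (norm (R j))\<^sup>2 - beta / 2 * (norm (R j))\<^sup>2
                  + 1/2 * qf P (X j - x))"
  define S1 where "S1 = (\<Sum>j<m. (f (X j) + gX j + (\<Sum>l\<in>{..<m} - {j}. gk l)) - Fxr + TT j)"
  define S2 where "S2 = (\<Sum>j<m. qf M (D j))"
  define K where "K = kappa * Lr * real tau / alpha + 2 * Lr * real tau"
  define LHSr where "LHSr = 1 / real m * S1 + (1/2 * (1 / real m) * S2 - K / (2 * real m) * Sd - 1 / (2 * real m) * SL)"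
  define Wr where "Wr = f (xs k) + Gk - Fxr + (- (lam k \<bullet> r k) + beta * (norm (r k))\<^sup>2)"
  define Vr where "Vr = - beta / 2 * (norm (r k))\<^sup>2 + 1/2 * qf P (xs k - x)"
  define RHSr where "RHSr = (1 - 1 / real m) * Wr + Vr"
  have F1: "S1 + 1/2 * S2 = (\<Sum>j<m. core j) + (real m - 1) * Gk - real m * Fxr"
  proof -
    have "S1 + 1/2 * S2 = (\<Sum>j<m. core j + (\<Sum>l\<in>{..<m} - {j}. gk l) - Fxr)"
      unfolding S1_def S2_def sum_distrib_left sum.distrib[symmetric]
      by (intro sum.cong) (auto simp: core_def TT_def)
    also have "\<dots> = (\<Sum>j<m. core j) + (real m - 1) * Gk - real m * Fxr"
      by (simp add: sum.distrib sum_subtractf sum_minus_one Gk_def)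
    finally show ?thesis .
  qed
  have mL: "real m * LHSr = S1 + 1/2 * S2 - K / 2 * Sd - SL / 2"
    using mpos by (simp add: LHSr_def field_simps)
  have mR: "real m * RHSr = (real m - 1) * Wr + real m * Vr"
    using mpos by (simp add: RHSr_def field_simps)
  have db: "f (xs k) - f x - grad (xhat k) \<bullet> (xs k - x) + EE \<le> K / 2 * Sd + SL / 2"
    using delay_bound by (simp add: K_def EE_def)
  have "real m * LHSr \<le> real m * RHSr"
    unfolding mL mR
    using F1 sumcore db unfolding Wr_def Vr_def Fxr_def
    by (simp add: algebra_simps) 
  hence real_core: "LHSr \<le> RHSr" using mpos by simp
  have Fx_eq: "F x = ereal Fxr"
    by (simp add: F_def Fxr_def gx_eq)
  show ?thesis
  proof (cases "m \<ge> 2 \<and> (\<exists>l<m. g l (xs k) = \<infinity>)")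
    case True
    then obtain l where l: "l < m" "g l (xs k) = \<infinity>" and m2: "m \<ge> 2" by blast
    have "(\<Sum>i<m. g i (xs k)) = \<infinity>" using l by (auto simp: sum_Pinfty)
    hence Fk: "F (xs k) = \<infinity>" by (simp add: F_def)
    have pos: "1 - 1 / real m > 0" using m2 by (simp add: field_simps)
    have "ereal (1 - 1 / real m) * (F (xs k) - F x + ereal (- (lam k \<bullet> r k) + beta * (norm (r k))\<^sup>2)) = \<infinity>"
      using pos m2 by (simp add: Fk Fx_eq)
    then show ?thesis using m2 by simp
  next
    case False
    have gk_eq: "\<And>j l. j < m \<Longrightarrow> l < m \<Longrightarrow> l \<noteq> j \<Longrightarrow> g l (xs k) = ereal (gk l)"
    proof -
      fix j l assume jl: "j < m" "l < m" "l \<noteq> j"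
      then have "m \<ge> 2" by linarith
      with False jl have "g l (xs k) \<noteq> \<infinity>" by blast
      with gnm[OF jl(2), of "xs k"] show "g l (xs k) = ereal (gk l)"
        by (cases "g l (xs k)") (auto simp: gk_def)
    qed
    have FX: "\<And>j. j < m \<Longrightarrow> F (X j) = ereal (f (X j) + gX j + (\<Sum>l\<in>{..<m} - {j}. gk l))"
    proof -
      fix j assume j: "j < m"
      have "(\<Sum>l<m. g l (X j)) = g j (X j) + (\<Sum>l\<in>{..<m} - {j}. g l (X j))"
        using j by (simp add: sum.remove)
      also have "(\<Sum>l\<in>{..<m} - {j}. g l (X j)) = (\<Sum>l\<in>{..<m} - {j}. ereal (gk l))"
      proof (intro sum.cong refl)
        fix l assume "l \<in> {..<m} - {j}"
        hence l: "l < m" "l \<noteq> j" by auto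
        have "blockproj blk l (X j) = blockproj blk l (xs k)"
          using step_other j l by (auto simp: vec_eq_iff)
        hence "g l (X j) = g l (xs k)" using g_block l by metis
        thus "g l (X j) = ereal (gk l)" using gk_eq[OF j l(1) l(2)] by simp
      qed
      finally show "F (X j) = ereal (f (X j) + gX j + (\<Sum>l\<in>{..<m} - {j}. gk l))"
        using gX_eq[OF j] by (simp add: F_def)
    qed
    have LHS_eq: "ereal (1 / real m) * (\<Sum>j<m. F (X j) - F x
         + ereal (- (Lam j \<bullet> R j) + (beta - rho) * (norm (R j))\<^sup>2 - beta / 2 * (norm (R j))\<^sup>2
                  + 1/2 * qf P (X j - x)))
     + ereal (1/2 * (1 / real m) * (\<Sum>j<m. qf (P - blkdiagL blk L - (alpha * Lc) *\<^sub>R mat 1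
                                           - beta *\<^sub>R (transpose A ** A)) (X j - xs k))
         - (kappa * Lr * real tau / alpha + 2 * Lr * real tau) / (2 * real m)
             * (\<Sum>d\<in>{k - tau..<k}. (norm (xs (d + 1) - xs d))\<^sup>2)
         - 1 / (2 * real m) * (\<Sum>d\<in>{k - tau..<k}. qf (blkdiagL blk L) (xs (d + 1) - xs d)))
       = ereal LHSr"
    proof -
      have "(\<Sum>j<m. F (X j) - F x
         + ereal (- (Lam j \<bullet> R j) + (beta - rho) * (norm (R j))\<^sup>2 - beta / 2 * (norm (R j))\<^sup>2
                  + 1/2 * qf P (X j - x))) = (\<Sum>j<m. ereal ((f (X j) + gX j + (\<Sum>l\<in>{..<m} - {j}. gk l)) - Fxr + TT j))"
        by (intro sum.cong refl) (simp add: FX Fx_eq TT_def)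
      also have "\<dots> = ereal S1" by (simp add: S1_def)
      finally show ?thesis
        by (simp add: LHSr_def M_def D_def Sd_def SL_def K_def S2_def)
    qed
    have RHS_eq: "ereal (1 - 1 / real m) * (F (xs k) - F x + ereal (- (lam k \<bullet> r k) + beta * (norm (r k))\<^sup>2))
       + ereal (- beta / 2 * (norm (r k))\<^sup>2 + 1/2 * qf P (xs k - x)) = ereal RHSr"
    proof (cases "m = 1")
      case True
      then show ?thesis by (simp add: RHSr_def Vr_def zero_ereal_def[symmetric])
    next
      case m1: False
      have "\<And>l. l < m \<Longrightarrow> g l (xs k) = ereal (gk l)"
      proof -
        fix l assume l: "l < m"
        show "g l (xs k) = ereal (gk l)"
        proof (cases "l = 0")
          case True
          then show ?thesis using gk_eq[of 1 l] l m1 blocks(1) by simp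
        next
          case False
          then show ?thesis using gk_eq[of 0 l] l by simp
        qed
      qed
      hence "F (xs k) = ereal (f (xs k) + Gk)" by (simp add: F_def Gk_def)
      then show ?thesis by (simp add: RHSr_def Vr_def Wr_def Fx_eq)
    qed
    show ?thesis unfolding LHS_eq RHS_eq using real_core by simp
  qed

qed

end
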